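(* Let $M$ be a compact codimension $0$ submanifold of $\mathbb{R}^d$ with $C^{1,1}$ boundary and positive reach $\tau=\tau(M)>0$, and let $S\subset M$ be a finite $\epsilon/2$-dense subset of $M$ with $\epsilon<\tau/2$. Then for any $r$ with $\epsilon\le r<\tau/2$, the union $\bigcup_{x\in S}B(x,r)$ deformation retracts onto $M$.
   Context: $M$ has $C^{1,1}$ boundary if each boundary point $x_0$ has a neighborhood $U$ in which, in suitable coordinates, $U\cap M=\{x\in U: x_1\ge f(x_2,\ldots,x_d)\}$ with $f$ of class $C^1$ and $\nabla f$ Lipschitz. $B(x,r)$ is the closed Euclidean ball. $S$ is $\delta$-dense in $M$ if $B(p,\delta)\cap S\ne\emptyset$ for all $p\in M$. The reach of a closed set $M$ is $\sup\{\rho\ge0:\ \text{every point at distance}\le\rho \text{ from } M \text{ has a unique nearest point in } M\}$. "$X$ deformation retracts onto $Y$" means the identity of $X$ is homotopic, relative to $Y\subset X$, to a retraction onto $Y$. *)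

theory Defs
  imports "HOL-Analysis.Analysis" "HOL-Library.Extended_Real"
begin

text \<open>C^{1,1} boundary of a (codimension 0) subset of Euclidean space: every
boundary point x0 has an open neighbourhood U in which, in suitable
(rigid, orthonormal) coordinates with first axis the unit vector n,
U \<inter> M = {x \<in> U. x \<bullet> n \<ge> f(remaining coordinates)}, where f is C^1 with
Lipschitz gradient. The dependence of f only on the remaining coordinates is
expressed by invariance of f along n; the translation part of the coordinate
change is absorbed into f.\<close>
definition has_C11_boundary :: "'a::euclidean_space set \<Rightarrow> bool" where
  "has_C11_boundary M \<longleftrightarrow>
     (\<forall>x0 \<in> frontier M. \<exists>U n f g L.
        open U \<and> x0 \<in> U \<and> norm n = 1 \<and>
        (\<forall>x t. f (x + t *\<^sub>R n) = f x) \<and>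
        (\<forall>x \<in> U. (f has_derivative (\<lambda>h. g x \<bullet> h)) (at x)) \<and>
        (\<forall>x \<in> U. \<forall>y \<in> U. norm (g x - g y) \<le> L * norm (x - y)) \<and>
        U \<inter> M = {x \<in> U. x \<bullet> n \<ge> f x})"

definition compact_C11_domain :: "'a::euclidean_space set \<Rightarrow> bool" where
  "compact_C11_domain M \<longleftrightarrow> compact M \<and> has_C11_boundary M"

definition reach :: "'a::euclidean_space set \<Rightarrow> ereal" where
  "reach M = Sup {ereal \<rho> | \<rho>. \<rho> \<ge> 0 \<and>
      (\<forall>x. infdist x M \<le> \<rho> \<longrightarrow> (\<exists>!p. p \<in> M \<and> dist x p = infdist x M))}"

definition dense_in :: "real \<Rightarrow> 'a::euclidean_space set \<Rightarrow> 'a set \<Rightarrow> bool" where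
  "dense_in \<delta> S M \<longleftrightarrow> (\<forall>p \<in> M. cball p \<delta> \<inter> S \<noteq> {})"

definition deformation_retracts_onto :: "'a::euclidean_space set \<Rightarrow> 'a set \<Rightarrow> bool" where
  "deformation_retracts_onto X Y \<longleftrightarrow>
     (\<exists>r. retraction X Y r \<and>
          homotopic_with_canon (\<lambda>h. \<forall>y \<in> Y. h y = y) X X id r)"

end

theory Submission imports Defs begin

definition nproj :: "'a::euclidean_space set \<Rightarrow> 'a \<Rightarrow> 'a" where
  "nproj M y = (THE p. p \<in> M \<and> dist y p = infdist y M)"

lemma norm_add_sq: fixes a e :: "'a::real_inner"
  shows "(norm (a + t *\<^sub>R e))\<^sup>2 = (norm a)\<^sup>2 + 2 * t * (e \<bullet> a) + t\<^sup>2 * (norm e)\<^sup>2"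
  unfolding power2_norm_eq_inner by (simp add: inner_add_left inner_add_right inner_commute power2_eq_square algebra_simps)

locale posreach =
  fixes M :: "'a::euclidean_space set" and R0 :: real
  assumes cpt: "compact M" and ne: "M \<noteq> {}" and R0pos: "0 < R0"
    and uniq: "\<And>y. infdist y M \<le> R0 \<Longrightarrow> \<exists>!p. p \<in> M \<and> dist y p = infdist y M"
begin

lemma proj: assumes "infdist y M \<le> R0"
  shows "nproj M y \<in> M" "dist y (nproj M y) = infdist y M"
proof -
  have "nproj M y \<in> M \<and> dist y (nproj M y) = infdist y M"
    unfolding nproj_def by (rule theI'[OF uniq[OF assms]])
  then show "nproj M y \<in> M" "dist y (nproj M y) = infdist y M" by auto
qed

lemma proj_eq: assumes "infdist y M \<le> R0" "p \<in> M" "dist y p = infdist y M"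
  shows "nproj M y = p"
  using uniq[OF assms(1)] proj[OF assms(1)] assms(2,3) by blast

lemma proj_M: "p \<in> M \<Longrightarrow> nproj M p = p"
  using proj_eq[of p p] R0pos by simp

lemma proj_cont: "continuous_on {y. infdist y M \<le> R0} (nproj M)"
proof -
  have fim: "nproj M \<in> {y. infdist y M \<le> R0} \<rightarrow> M" using proj by auto
  have eq: "(\<lambda>x. (x, nproj M x)) ` {y. infdist y M \<le> R0} =
     {z. infdist (fst z) M \<le> R0} \<inter> (UNIV \<times> M) \<inter> {z. dist (fst z) (snd z) = infdist (fst z) M}"
  proof (rule set_eqI, rule iffI)
    fix z assume "z \<in> (\<lambda>x. (x, nproj M x)) ` {y. infdist y M \<le> R0}"
    then show "z \<in> {z. infdist (fst z) M \<le> R0} \<inter> (UNIV \<times> M) \<inter> {z. dist (fst z) (snd z) = infdist (fst z) M}"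
      using proj by auto
  next
    fix z assume z: "z \<in> {z. infdist (fst z) M \<le> R0} \<inter> (UNIV \<times> M) \<inter> {z. dist (fst z) (snd z) = infdist (fst z) M}"
    obtain a b where ab: "z = (a, b)" by fastforce
    have "nproj M a = b" using z ab proj_eq[of a b] by auto
    then show "z \<in> (\<lambda>x. (x, nproj M x)) ` {y. infdist y M \<le> R0}"
      using z ab by (auto intro!: image_eqI[where x=a])
  qed
  have "closed ((\<lambda>x. (x, nproj M x)) ` {y. infdist y M \<le> R0})"
    unfolding eq
    by (intro closed_Int closed_Times closed_Collect_le closed_Collect_eq continuous_intros)
       (auto simp: compact_imp_closed cpt)
  then show ?thesis using continuous_from_closed_graph[OF cpt fim] by blast
qed

lemma seg_near:
  assumes p: "p \<in> M" "dist y p = infdist y M" and l: "0 \<le> l" "l \<le> 1"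
  shows "infdist (p + l *\<^sub>R (y - p)) M = l * dist y p"
proof -
  define z where "z = p + l *\<^sub>R (y - p)"
  have dzp: "dist z p = l * dist y p"
    using l by (simp add: z_def dist_norm dist_commute)
  have dyz: "dist y z = (1 - l) * dist y p"
  proof -
    have "y - z = (1 - l) *\<^sub>R (y - p)" by (simp add: z_def algebra_simps)
    then show ?thesis using l by (simp add: dist_norm)
  qed
  obtain m where m: "m \<in> M" "infdist z M = dist z m"
    using infdist_attains_inf[OF compact_imp_closed[OF cpt] ne] by blast
  have "dist y p \<le> dist y m" using p m infdist_le by metis
  also have "\<dots> \<le> dist y z + dist z m" by (rule dist_triangle)
  finally have "l * dist y p \<le> infdist z M" using dyz m by (simp add: algebra_simps)
  moreover have "infdist z M \<le> l * dist y p" using infdist_le[OF p(1), of z] dzp by simp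
  ultimately show ?thesis unfolding z_def by linarith
qed

lemma perturb:
  assumes w: "infdist w M < R0" and e: "e \<bullet> (w - nproj M w) > 0"
  shows "\<forall>\<^sub>F th in at_right 0. infdist (w + th *\<^sub>R e) M > infdist w M"
proof -
  have g: "((\<lambda>th. w + th *\<^sub>R e) \<longlongrightarrow> w) (at_right (0::real))"
    by (rule tendsto_eq_intros refl)+ (auto intro: tendsto_ident_at)
  have "((\<lambda>th. infdist (w + th *\<^sub>R e) M) \<longlongrightarrow> infdist w M) (at_right (0::real))"
    by (rule tendsto_infdist[OF g])
  then have ev1: "\<forall>\<^sub>F th in at_right 0. infdist (w + th *\<^sub>R e) M < R0"
    using w order_tendstoD(2) by blast
  then have ev1': "\<forall>\<^sub>F th in at_right 0. w + th *\<^sub>R e \<in> {y. infdist y M \<le> R0}"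
    by (auto elim: eventually_mono)
  have "((\<lambda>th. nproj M (w + th *\<^sub>R e)) \<longlongrightarrow> nproj M w) (at_right (0::real))"
    by (rule continuous_on_tendsto_compose[OF proj_cont g _ ev1']) (use w in auto)
  then have "((\<lambda>th. e \<bullet> (w - nproj M (w + th *\<^sub>R e))) \<longlongrightarrow> e \<bullet> (w - nproj M w)) (at_right (0::real))"
    by (intro tendsto_intros)
  then have ev2: "\<forall>\<^sub>F th in at_right 0. e \<bullet> (w - nproj M (w + th *\<^sub>R e)) > 0"
    using e order_tendstoD(1) by blast
  show ?thesis
    using ev1 ev2 eventually_at_right_less[of "0::real"]
  proof eventually_elim
    case (elim th)
    define b where "b = nproj M (w + th *\<^sub>R e)"
    have b: "b \<in> M" "dist (w + th *\<^sub>R e) b = infdist (w + th *\<^sub>R e) M"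
      using proj[of "w + th *\<^sub>R e"] elim by (auto simp: b_def)
    have "(norm (w + th *\<^sub>R e - b))\<^sup>2 = (norm (w - b))\<^sup>2 + 2 * th * (e \<bullet> (w - b)) + th\<^sup>2 * (norm e)\<^sup>2"
      using norm_add_sq[of "w - b" th e] by (simp add: algebra_simps)
    moreover have "th * (e \<bullet> (w - b)) > 0" using elim by (simp add: b_def)
    moreover have "infdist w M \<le> norm (w - b)" using infdist_le[OF b(1), of w] by (simp add: dist_norm)
    moreover have "(infdist w M)\<^sup>2 \<le> (norm (w - b))\<^sup>2"
      using power_mono[OF \<open>infdist w M \<le> norm (w - b)\<close> infdist_nonneg] .
    moreover have "0 \<le> th\<^sup>2 * (norm e)\<^sup>2" by simp
    ultimately have "(infdist w M)\<^sup>2 < (norm (w + th *\<^sub>R e - b))\<^sup>2"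
      by linarith
    then have "infdist w M < norm (w + th *\<^sub>R e - b)"
      by (rule power_less_imp_less_base) simp
    then show ?case using b by (simp add: dist_norm)
  qed
qed

lemma step:
  assumes a: "a \<in> M" and u: "norm u = 1" and t: "0 < t" and sg: "0 < sg" "sg \<le> t"
    and tR: "t + sg < R0" and dt: "infdist (a + t *\<^sub>R u) M = t"
  shows "infdist (a + (t + sg) *\<^sub>R u) M = t + sg"
proof -
  define c where "c = a + t *\<^sub>R u"
  obtain w where wK: "w \<in> cball c sg" and wmax: "\<And>z. z \<in> cball c sg \<Longrightarrow> infdist z M \<le> infdist w M"
    using continuous_attains_sup[OF compact_cball _ continuous_on_infdist[OF continuous_on_id], of c sg M] sg
    by auto
  define D where "D = infdist w M"
  have Dge: "t \<le> D" using wmax[of c] sg dt by (simp add: D_def c_def)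
  have dwc: "dist w c \<le> sg" using wK by (simp add: dist_commute)
  have Dle: "D \<le> t + sg" using infdist_triangle[of w M c] dwc dt by (simp add: D_def c_def)
  have wR: "infdist w M < R0" using Dle tR by (simp add: D_def)
  define b where "b = nproj M w"
  have b: "b \<in> M" "dist w b = D" using proj[of w] wR by (auto simp: b_def D_def)
  have key: False if e: "e \<bullet> (w - b) > 0" and ev: "\<forall>\<^sub>F th in at_right 0. w + th *\<^sub>R e \<in> cball c sg" for e
  proof -
    have "\<forall>\<^sub>F th in at_right 0. w + th *\<^sub>R e \<in> cball c sg \<and> infdist (w + th *\<^sub>R e) M > infdist w M"
      using ev perturb[OF wR] e unfolding b_def by (auto intro: eventually_conj)
    then obtain th where "w + th *\<^sub>R e \<in> cball c sg" "infdist (w + th *\<^sub>R e) M > infdist w M"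
      using eventually_happens'[of "at_right (0::real)"] by auto
    then show False using wmax by fastforce
  qed
  have Dpos: "0 < D" using Dge t by simp
  have g: "((\<lambda>th. w + th *\<^sub>R e) \<longlongrightarrow> w) (at_right (0::real))" for e
    by (rule tendsto_eq_intros refl)+ (auto intro: tendsto_ident_at)
  have bd: "dist w c = sg"
  proof (rule ccontr)
    assume "dist w c \<noteq> sg"
    then have lt: "dist c w < sg" using dwc by (simp add: dist_commute)
    have "((\<lambda>th. dist c (w + th *\<^sub>R (w - b))) \<longlongrightarrow> dist c w) (at_right (0::real))"
      by (intro tendsto_intros g)
    from order_tendstoD(2)[OF this lt]
    have "\<forall>\<^sub>F th in at_right 0. w + th *\<^sub>R (w - b) \<in> cball c sg"
      by (auto elim: eventually_mono)
    moreover have "(w - b) \<bullet> (w - b) > 0" using b Dpos by (auto simp: dist_norm)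
    ultimately show False using key by blast
  qed
  define A where "A = w - b"
  define B where "B = w - c"
  have nA: "norm A = D" using b by (simp add: A_def dist_norm)
  have nB: "norm B = sg" using bd by (simp add: B_def dist_norm)
  have AB: "A \<bullet> B = norm A * norm B"
  proof (rule ccontr)
    assume "A \<bullet> B \<noteq> norm A * norm B"
    then have lt: "A \<bullet> B < D * sg" using norm_cauchy_schwarz[of A B] nA nB by simp
    define e where "e = (1/D) *\<^sub>R A - (1/sg) *\<^sub>R B"
    have eA: "e \<bullet> A > 0"
    proof -
      have AA: "A \<bullet> A = D * D" using nA by (metis power2_eq_square power2_norm_eq_inner)
      have "e \<bullet> A = (1/D) * (A \<bullet> A) - (1/sg) * (A \<bullet> B)"
        unfolding e_def inner_diff_left inner_scaleR_left by (simp add: inner_commute)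
      also have "\<dots> = D - (A \<bullet> B) / sg" using AA Dpos by simp
      also have "\<dots> > 0" using lt sg by (simp add: field_simps)
      finally show ?thesis .
    qed
    have eB: "e \<bullet> B < 0"
    proof -
      have BB: "B \<bullet> B = sg * sg" using nB by (metis power2_eq_square power2_norm_eq_inner)
      have "e \<bullet> B = (1/D) * (A \<bullet> B) - (1/sg) * (B \<bullet> B)"
        unfolding e_def inner_diff_left inner_scaleR_left by (simp add: inner_commute)
      also have "\<dots> = (A \<bullet> B) / D - sg" using BB sg by simp
      also have "\<dots> < 0" using lt Dpos by (simp add: field_simps)
      finally show ?thesis .
    qed
    have ne0: "e \<noteq> 0" using eB by auto
    define k where "k = - (e \<bullet> B) / (norm e)\<^sup>2"
    have kpos: "0 < k" using eB ne0 by (simp add: k_def divide_neg_pos)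
    have "((\<lambda>th. th) \<longlongrightarrow> 0) (at_right (0::real))" by (rule tendsto_ident_at)
    then have "\<forall>\<^sub>F th in at_right 0. th < k" using order_tendstoD(2)[OF _ kpos] by blast
    then have "\<forall>\<^sub>F th in at_right 0. w + th *\<^sub>R e \<in> cball c sg"
      using eventually_at_right_less[of "0::real"]
    proof eventually_elim
      case (elim th)
      have "th * (norm e)\<^sup>2 < - (e \<bullet> B)"
        using elim ne0 by (simp add: k_def field_simps)
      then have neg: "2 * (e \<bullet> B) + th * (norm e)\<^sup>2 < 0" using eB by linarith
      have "(norm (B + th *\<^sub>R e))\<^sup>2 = sg\<^sup>2 + th * (2 * (e \<bullet> B) + th * (norm e)\<^sup>2)"
        using norm_add_sq[of B th e] nB by (simp add: power2_eq_square algebra_simps)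
      moreover have "th * (2 * (e \<bullet> B) + th * (norm e)\<^sup>2) < 0"
        using elim neg by (simp add: mult_pos_neg)
      ultimately have "(norm (B + th *\<^sub>R e))\<^sup>2 \<le> sg\<^sup>2" by linarith
      then have "norm (B + th *\<^sub>R e) \<le> sg" using sg by (simp add: power2_le_iff_abs_le)
      then show ?case by (simp add: B_def dist_norm norm_minus_commute algebra_simps)
    qed
    then show False using key[of e] eA by (simp add: A_def)
  qed
  have "norm A *\<^sub>R B = norm B *\<^sub>R A" using AB norm_cauchy_schwarz_eq by blast
  then have "D *\<^sub>R B = sg *\<^sub>R A" using nA nB by simp
  then have "(1/D) *\<^sub>R (D *\<^sub>R B) = (1/D) *\<^sub>R (sg *\<^sub>R A)" by simp
  then have BA: "B = (sg / D) *\<^sub>R A" using Dpos by simp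
  define l where "l = 1 - sg / D"
  have l: "0 \<le> l" "l \<le> 1" using Dge sg Dpos by (auto simp: l_def field_simps)
  have cb: "c = b + l *\<^sub>R (w - b)"
    using BA unfolding l_def A_def B_def by (simp add: algebra_simps)
  have "infdist c M = l * dist w b"
    using seg_near[OF b(1) _ l, of w] proj[of w] wR cb by (simp add: b_def)
  then have tD: "t = l * D" using dt b by (simp add: c_def)
  have "dist c b = l * D" using cb l b(2) by (simp add: dist_norm)
  then have "nproj M c = b" using proj_eq[of c b] b tD dt tR sg by (simp add: c_def)
  moreover have "nproj M c = a" using proj_eq[of c a] a dt tR sg u by (simp add: c_def dist_norm)
  ultimately have ba: "b = a" by simp
  have "l * D = D - sg" using Dpos by (simp add: l_def algebra_simps)
  then have "t = D - sg" using tD by simp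
  then have DD: "D = t + sg" by simp
  have lpos: "0 < l" using tD t Dpos by (metis mult_pos_pos zero_less_mult_pos2 l(1) order_le_less)
  have "l *\<^sub>R (w - a) = l *\<^sub>R (D *\<^sub>R u)"
    using cb ba tD unfolding c_def by (simp add: algebra_simps)
  then have "l *\<^sub>R (w - a) = l *\<^sub>R (D *\<^sub>R u)" by simp
  then have "w - a = D *\<^sub>R u" using lpos by (metis scaleR_cancel_left less_irrefl)
  then have "w = a + D *\<^sub>R u" by (simp add: algebra_simps)
  then show ?thesis using DD by (simp add: D_def)
qed

lemma ballprop:
  assumes a: "a \<in> M" and u: "norm u = 1" and d: "0 < d" "infdist (a + d *\<^sub>R u) M = d"
    and R: "d \<le> R" "R < R0"
  shows "infdist (a + R *\<^sub>R u) M = R"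
proof -
  have ind: "infdist (a + min (2^k * d) R *\<^sub>R u) M = min (2^k * d) R" for k :: nat
  proof (induction k)
    case 0
    then show ?case using d R by simp
  next
    case (Suc k)
    show ?case
    proof (cases "R \<le> 2^k * d")
      case True
      moreover have "(2::real)^k * d \<le> 2^Suc k * d" using d by simp
      ultimately have "R \<le> 2^Suc k * d" by linarith
      then have "min (2^Suc k * d) R = R" "min (2^k * d) R = R" using True by (auto intro: min_absorb2)
      then show ?thesis using Suc by simp
    next
      case False
      define t where "t = 2^k * d"
      define sg where "sg = min t (R - t)"
      have t: "0 < t" using d by (simp add: t_def)
      have "infdist (a + (t + sg) *\<^sub>R u) M = t + sg"
        using step[OF a u t, of sg] Suc False R t by (auto simp: t_def sg_def)
      moreover have "t + sg = min (2^Suc k * d) R" using False by (auto simp: t_def sg_def)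
      ultimately show ?thesis by simp
    qed
  qed
  obtain k :: nat where "R / d < 2^k" using real_arch_pow[of 2 "R / d"] by auto
  then have "R \<le> 2^k * d" using d by (simp add: field_simps)
  then show ?thesis using ind[of k] by simp
qed

lemma real_ineq:
  fixes A Bq r d m :: real
  assumes h1: "4 * r * Bq \<le> A" and h2: "A - 2 * d * Bq + d^2 \<le> r^2"
    and h3: "r < 2 * d" "d \<le> r" "0 < d" and m: "0 \<le> m" "m \<le> d"
  shows "A - 2 * m * Bq + m^2 \<le> r^2"
proof -
  have r: "0 < r" using h3 by simp
  have s1: "4 * r * d * Bq \<le> d * A" using mult_left_mono[OF h1, of d] h3 by (simp add: algebra_simps)
  have s2: "A * (2 * r - d) \<le> 2 * r * (r^2 - d^2)"
  proof -
    have "2 * r * (A - 2 * d * Bq + d^2) \<le> 2 * r * r^2" using mult_left_mono[OF h2, of "2*r"] r by simp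
    then show ?thesis using s1 by (simp add: algebra_simps power2_eq_square)
  qed
  have s3: "A \<le> r^2"
  proof (rule ccontr)
    assume "\<not> A \<le> r^2"
    then have "r^2 * (2 * r - d) < A * (2 * r - d)" using h3 by (intro mult_strict_right_mono) auto
    with s2 have "r^2 * (2 * r - d) < 2 * r * (r^2 - d^2)" by linarith
    then have "(r * d) * (2 * d) < (r * d) * r" by (simp add: algebra_simps power2_eq_square)
    then have "2 * d < r" using r h3 mult_less_cancel_left_pos[of "r * d"] by simp
    then show False using h3 by simp
  qed
  define k where "k = m / d"
  have k: "0 \<le> k" "k \<le> 1" "m = k * d" using m h3 by (auto simp: k_def field_simps)
  have "k^2 * d^2 \<le> k * d^2" using k by (intro mult_right_mono) (auto simp: power2_eq_square mult_left_le_one_le)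
  then have "A - 2 * m * Bq + m^2 \<le> (1 - k) * A + k * (A - 2 * d * Bq + d^2)"
    using k by (simp add: algebra_simps power2_eq_square)
  also have "\<dots> \<le> (1 - k) * r^2 + k * r^2"
    using k s3 h2 by (intro add_mono mult_left_mono) auto
  finally show ?thesis by (simp add: algebra_simps)
qed

lemma seg_in:
  assumes SM: "S \<subseteq> M" and dense: "\<And>p. p \<in> M \<Longrightarrow> \<exists>s\<in>S. dist p s \<le> ep / 2"
    and er: "ep \<le> r" and rR: "2 * r < R0"
    and x: "x \<in> S" and y: "dist x y \<le> r" and l: "0 \<le> l" "l \<le> 1"
  shows "\<exists>s\<in>S. dist s (y + l *\<^sub>R (nproj M y - y)) \<le> r"
proof -
  have xM: "x \<in> M" using x SM by auto
  have r0: "0 \<le> r" using y zero_le_dist[of x y] by linarith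
  have dy: "infdist y M \<le> r" using infdist_le[OF xM, of y] y by (simp add: dist_commute)
  have yR: "infdist y M \<le> R0" using dy rR r0 by linarith
  define p where "p = nproj M y"
  define d where "d = infdist y M"
  have p: "p \<in> M" "dist y p = d" using proj[OF yR] by (auto simp: p_def d_def)
  define z where "z = y + l *\<^sub>R (p - y)"
  have zp: "z = p + (1 - l) *\<^sub>R (y - p)" by (simp add: z_def algebra_simps)
  have dpz: "dist p z = (1 - l) * d" using p l by (simp add: zp dist_norm dist_commute)
  have d0: "0 \<le> d" by (simp add: d_def infdist_nonneg)
  show ?thesis
  proof (cases "d \<le> r - ep / 2")
    case True
    obtain s where s: "s \<in> S" "dist p s \<le> ep / 2" using dense[OF p(1)] by blast
    have "dist s z \<le> dist s p + dist p z" by (rule dist_triangle)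
    also have "\<dots> \<le> ep / 2 + d"
    proof -
      have "(1 - l) * d \<le> d" using l d0 by (simp add: mult_left_le_one_le)
      then show ?thesis using s dpz by (simp add: dist_commute)
    qed
    also have "\<dots> \<le> r" using True by simp
    finally show ?thesis using s by (auto simp: z_def p_def)
  next
    case False
    then have dr: "r < 2 * d" using er by simp
    have dpos: "0 < d" using dr r0 by simp
    define u where "u = (1 / d) *\<^sub>R (y - p)"
    have nu: "norm u = 1" using p dpos by (simp add: u_def dist_norm)
    have yu: "y = p + d *\<^sub>R u" using dpos by (simp add: u_def)
    have "infdist (p + d *\<^sub>R u) M = d" using yu by (simp add: d_def)
    from ballprop[OF p(1) nu dpos this, of "2 * r"]
    have "infdist (p + (2 * r) *\<^sub>R u) M = 2 * r" using dy rR r0 by (simp add: d_def)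
    then have "2 * r \<le> dist x (p + (2 * r) *\<^sub>R u)"
      using infdist_le[OF xM, of "p + (2 * r) *\<^sub>R u"] by (simp add: dist_commute)
    define P where "P = x - p"
    have dx: "dist x (p + t *\<^sub>R u) = norm (P + (- t) *\<^sub>R u)" for t
      by (simp add: P_def dist_norm algebra_simps)
    have sq: "(dist x (p + t *\<^sub>R u))\<^sup>2 = (norm P)\<^sup>2 - 2 * t * (u \<bullet> P) + t\<^sup>2" for t
      using norm_add_sq[of P "- t" u] nu by (simp add: dx)
    have h1: "4 * r * (u \<bullet> P) \<le> (norm P)\<^sup>2"
    proof -
      have "(2 * r)\<^sup>2 \<le> (dist x (p + (2 * r) *\<^sub>R u))\<^sup>2"
        using \<open>2 * r \<le> _\<close> r0 by (intro power_mono) auto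
      then show ?thesis unfolding sq by (simp add: power2_eq_square algebra_simps)
    qed
    have h2: "(norm P)\<^sup>2 - 2 * d * (u \<bullet> P) + d\<^sup>2 \<le> r\<^sup>2"
    proof -
      have "(dist x (p + d *\<^sub>R u))\<^sup>2 \<le> r\<^sup>2" using y yu by (intro power_mono) auto
      then show ?thesis unfolding sq .
    qed
    have "(norm P)\<^sup>2 - 2 * ((1 - l) * d) * (u \<bullet> P) + ((1 - l) * d)\<^sup>2 \<le> r\<^sup>2"
      using l dpos p by (intro real_ineq[OF h1 h2 dr]) (auto simp: d_def dy mult_left_le_one_le)
    then have "(dist x z)\<^sup>2 \<le> r\<^sup>2"
      using sq[of "(1 - l) * d"] zp yu by (simp add: scaleR_scaleR)
    then have "dist x z \<le> r" using r0 by (simp add: power2_le_iff_abs_le)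
    then show ?thesis using x by (auto simp: z_def p_def)
  qed
qed

end


theorem proposition2p3:
  fixes M S :: "'a::euclidean_space set" and \<epsilon> r :: real
  assumes "compact_C11_domain M"
    and "reach M > 0"
    and "S \<subseteq> M" and "finite S" and "dense_in (\<epsilon> / 2) S M"
    and "ereal \<epsilon> < reach M / 2"
    and "\<epsilon> \<le> r" and "ereal r < reach M / 2"
  shows "deformation_retracts_onto (\<Union>x\<in>S. cball x r) M"
proof -
  have cpt: "compact M" using assms(1) by (simp add: compact_C11_domain_def)
  define RS where "RS = {ereal \<rho> | \<rho>. \<rho> \<ge> 0 \<and>
      (\<forall>x. infdist x M \<le> \<rho> \<longrightarrow> (\<exists>!p. p \<in> M \<and> dist x p = infdist x M))}"
  have reachRS: "reach M = Sup RS" by (simp add: reach_def RS_def)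
  have ne: "M \<noteq> {}"
  proof
    assume "M = {}"
    then have "RS = {}" by (auto simp: RS_def infdist_def)
    then show False using assms(2) reachRS by simp
  qed
  obtain R0 where R0: "2 * r < R0" "ereal R0 < reach M"
  proof (cases "reach M")
    case (real q)
    then have "r < q / 2" using assms(8) by simp
    then show ?thesis using that[of "r + q / 2"] real by simp
  next
    case PInf
    then show ?thesis using that[of "2 * r + 1"] by simp
  next
    case MInf
    then show ?thesis using assms(2) by simp
  qed
  obtain \<rho> where rho: "\<rho> \<ge> 0" "\<forall>x. infdist x M \<le> \<rho> \<longrightarrow> (\<exists>!p. p \<in> M \<and> dist x p = infdist x M)" "R0 < \<rho>"
    using R0(2) unfolding reachRS less_Sup_iff RS_def by auto
  have uniq: "\<And>y. infdist y M \<le> R0 \<Longrightarrow> \<exists>!p. p \<in> M \<and> dist y p = infdist y M"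
    using rho by auto
  have dense: "\<And>p. p \<in> M \<Longrightarrow> \<exists>s\<in>S. dist p s \<le> \<epsilon> / 2"
    using assms(5) by (auto simp: dense_in_def)
  obtain p0 s0 where "p0 \<in> M" "s0 \<in> S" "dist p0 s0 \<le> \<epsilon> / 2" using ne dense by blast
  then have ep0: "0 \<le> \<epsilon>" using zero_le_dist[of p0 s0] by linarith
  have r0: "0 \<le> r" using ep0 assms(7) by simp
  interpret posreach M R0
    by unfold_locales (use cpt ne uniq R0 r0 in auto)
  define X where "X = (\<Union>x\<in>S. cball x r)"
  have MX: "M \<subseteq> X"
  proof
    fix p assume "p \<in> M"
    then obtain s where "s \<in> S" "dist p s \<le> \<epsilon> / 2" using dense by blast
    moreover have "dist s p \<le> r" using calculation assms(7) ep0 by (simp add: dist_commute)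
    ultimately show "p \<in> X" by (auto simp: X_def)
  qed
  have XR: "X \<subseteq> {y. infdist y M \<le> R0}"
  proof
    fix y assume "y \<in> X"
    then obtain x where "x \<in> S" "dist x y \<le> r" by (auto simp: X_def)
    then have "infdist y M \<le> r" using infdist_le[of x M y] assms(3) by (auto simp: dist_commute)
    then show "y \<in> {y. infdist y M \<le> R0}" using R0 r0 by simp
  qed
  have contp: "continuous_on X (nproj M)" using continuous_on_subset[OF proj_cont XR] .
  have segX: "y + t *\<^sub>R (nproj M y - y) \<in> X" if "y \<in> X" "0 \<le> t" "t \<le> 1" for y t
  proof -
    obtain x where "x \<in> S" "dist x y \<le> r" using \<open>y \<in> X\<close> by (auto simp: X_def)
    from seg_in[OF assms(3) dense assms(7) R0(1) this that(2,3)]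
    show ?thesis by (auto simp: X_def)
  qed
  have ret: "retraction X M (nproj M)"
    unfolding retraction_def using MX contp proj XR proj_M by auto
  define H where "H = (\<lambda>z. snd z + fst z *\<^sub>R (nproj M (snd z) - snd z))"
  have contH: "continuous_on ({0..1} \<times> X) H"
    unfolding H_def
    by (intro continuous_intros continuous_on_compose2[OF contp]) auto
  have Him: "H ` ({0..1} \<times> X) \<subseteq> X" using segX by (auto simp: H_def)
  have "continuous_map (prod_topology (top_of_set {0..1}) (top_of_set X)) (top_of_set X) H"
  proof -
    have e: "{0..1::real} \<times> UNIV \<inter> {0..1} \<times> X = {0..1} \<times> X" by auto
    show ?thesis
      using contH Him by (simp add: prod_topology_subtopology euclidean_product_topology
          continuous_map_subtopology_eu subtopology_subtopology e image_subset_iff_funcset)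
  qed
  moreover have "\<forall>t\<in>{0..1}. \<forall>y\<in>M. H (t, y) = y" using proj_M by (simp add: H_def)
  ultimately have "homotopic_with_canon (\<lambda>h. \<forall>y \<in> M. h y = y) X X id (nproj M)"
    unfolding homotopic_with_def by (intro exI[of _ H]) (auto simp: H_def)
  then show ?thesis using ret unfolding deformation_retracts_onto_def X_def by blast
qed

end
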